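(* Let $E$ be a complex vector space of dimension $2$ and let $f,g$ be linear endomorphisms of $E$. Let $(t_n)_{n\in\mathbb{N}}$ be a strictly increasing sequence of integers with $t_0=1$ and $t_1=2$. If for every $n\in\mathbb{N}$, $\exp(t_n f+g)=\exp(t_n f)\circ\exp(g)$, then $f$ and $g$ are simultaneously trigonalizable (there is a basis of $E$ in which both are represented by upper triangular matrices).
   Context: $\exp(u)=\sum_{k\ge0}u^k/k!$ for a linear endomorphism $u$. *)

theory Defs
  imports "HOL-Analysis.Analysis"
begin

text \<open>Linear endomorphisms of the 2-dimensional complex space are represented by
  their matrices in the standard basis, i.e. elements of complex^2^2.\<close>

fun matpow :: "complex^'n^'n \<Rightarrow> nat \<Rightarrow> complex^'n^'n" where
  "matpow A 0 = mat 1"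
| "matpow A (Suc k) = A ** matpow A k"

definition mexp :: "complex^'n^'n \<Rightarrow> complex^'n^'n" where
  "mexp A = (\<Sum>k. (1 / fact k) *\<^sub>R matpow A k)"

definition upper_triangular :: "complex^('n::{finite,linorder})^('n::{finite,linorder}) \<Rightarrow> bool" where
  "upper_triangular M \<longleftrightarrow> (\<forall>i j. j < i \<longrightarrow> M $ i $ j = 0)"

definition simult_trigonalizable :: "complex^('n::{finite,linorder})^('n::{finite,linorder}) \<Rightarrow> complex^('n::{finite,linorder})^('n::{finite,linorder}) \<Rightarrow> bool" where
  "simult_trigonalizable F G \<longleftrightarrow>
     (\<exists>P :: complex^('n::{finite,linorder})^('n::{finite,linorder}). invertible P \<and> upper_triangular (matrix_inv P ** F ** P)
                      \<and> upper_triangular (matrix_inv P ** G ** P))"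

end

theory Submission
  imports Defs
begin

fun uv :: "complex \<Rightarrow> complex \<Rightarrow> nat \<Rightarrow> complex \<times> complex" where
  "uv T D 0 = (0, 1)"
| "uv T D (Suc k) = (T * fst (uv T D k) + snd (uv T D k), - D * fst (uv T D k))"

definition Uf :: "complex \<Rightarrow> complex \<Rightarrow> complex" where
  "Uf l1 l2 = (if l1 = l2 then exp l1 else (exp l1 - exp l2) / (l1 - l2))"
definition Vf :: "complex \<Rightarrow> complex \<Rightarrow> complex" where
  "Vf l1 l2 = (if l1 = l2 then (1 - l1) * exp l1 else (l1 * exp l2 - l2 * exp l1) / (l1 - l2))"

lemma uv_distinct:
  assumes "l1 \<noteq> l2"
  shows "uv (l1+l2) (l1*l2) k = ((l1^k - l2^k)/(l1-l2), (l1*l2^k - l2*l1^k)/(l1-l2))"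
proof (induction k)
  case 0
  then show ?case using assms by simp
next
  case (Suc k)
  have d: "l1 - l2 \<noteq> 0" using assms by simp
  have a: "fst (uv (l1+l2) (l1*l2) k) = (l1^k - l2^k)/(l1-l2)"
    and b: "snd (uv (l1+l2) (l1*l2) k) = (l1*l2^k - l2*l1^k)/(l1-l2)" using Suc by simp_all
  have "fst (uv (l1+l2) (l1*l2) (Suc k)) = ((l1+l2)*(l1^k - l2^k) + (l1*l2^k - l2*l1^k))/(l1-l2)"
    by (simp add: a b add_divide_distrib)
  also have "(l1+l2)*(l1^k - l2^k) + (l1*l2^k - l2*l1^k) = l1^Suc k - l2^Suc k"
    by (simp add: algebra_simps)
  finally have 1: "fst (uv (l1+l2) (l1*l2) (Suc k)) = (l1^Suc k - l2^Suc k)/(l1-l2)" .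
  have "snd (uv (l1+l2) (l1*l2) (Suc k)) = (- (l1*l2) * (l1^k - l2^k))/(l1-l2)"
    by (simp add: a)
  also have "- (l1*l2) * (l1^k - l2^k) = l1*l2^Suc k - l2*l1^Suc k"
    by (simp add: algebra_simps)
  finally have 2: "snd (uv (l1+l2) (l1*l2) (Suc k)) = (l1*l2^Suc k - l2*l1^Suc k)/(l1-l2)" .
  show ?case using 1 2 by (metis prod.collapse)
qed

lemma uv_equal:
  shows "uv (2*l) (l*l) k = (of_nat k * l^(k-1), (1 - of_nat k) * l^k)"
proof (induction k)
  case 0
  then show ?case by simp
next
  case (Suc k)
  have a: "fst (uv (2*l) (l*l) k) = of_nat k * l^(k-1)"
    and b: "snd (uv (2*l) (l*l) k) = (1 - of_nat k) * l^k" using Suc by simp_all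
  have 1: "fst (uv (2*l) (l*l) (Suc k)) = of_nat (Suc k) * l^(Suc k - 1)"
  proof (cases k)
    case 0
    then show ?thesis by (simp add: a b)
  next
    case (Suc m)
    have a': "fst (uv (2*l) (l*l) (Suc m)) = of_nat (Suc m) * l^m" using a Suc by simp
    have b': "snd (uv (2*l) (l*l) (Suc m)) = (1 - of_nat (Suc m)) * l^(Suc m)" using b Suc by simp
    show ?thesis unfolding Suc by (subst uv.simps(2), simp only: fst_conv a' b') (simp add: algebra_simps)
  qed
  have 2: "snd (uv (2*l) (l*l) (Suc k)) = (1 - of_nat (Suc k)) * l^(Suc k)"
  proof (cases k)
    case 0
    then show ?thesis by (simp add: a b)
  next
    case (Suc m)
    have a': "fst (uv (2*l) (l*l) (Suc m)) = of_nat (Suc m) * l^m" using a Suc by simp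
    show ?thesis unfolding Suc by (subst uv.simps(2), simp only: snd_conv a') (simp add: algebra_simps)
  qed
  show ?case using 1 2 by (metis prod.collapse)
qed

lemma exp_sums': "(\<lambda>n. of_real (1 / fact n) * x ^ n) sums exp (x::complex)"
  using exp_converges[of x] by (simp add: scaleR_conv_of_real divide_inverse)

lemma uv_sums:
  assumes "T = l1 + l2" "D = l1 * l2"
  shows "(\<lambda>k. of_real (1 / fact k) * fst (uv T D k)) sums Uf l1 l2"
    and "(\<lambda>k. of_real (1 / fact k) * snd (uv T D k)) sums Vf l1 l2"
proof -
  have "(\<lambda>k. of_real (1 / fact k) * fst (uv T D k)) sums Uf l1 l2 \<and>
        (\<lambda>k. of_real (1 / fact k) * snd (uv T D k)) sums Vf l1 l2"
  proof (cases "l1 = l2")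
    case False
    have d: "l1 - l2 \<noteq> 0" using False by simp
    have e1: "(\<lambda>k. (of_real (1 / fact k) * l1 ^ k - of_real (1 / fact k) * l2 ^ k) / (l1 - l2))
        sums ((exp l1 - exp l2) / (l1 - l2))"
      by (intro sums_divide sums_diff exp_sums')
    have e2: "(\<lambda>k. (l1 * (of_real (1 / fact k) * l2 ^ k) - l2 * (of_real (1 / fact k) * l1 ^ k)) / (l1 - l2))
        sums ((l1 * exp l2 - l2 * exp l1) / (l1 - l2))"
      by (intro sums_divide sums_diff sums_mult exp_sums')
    show ?thesis using e1 e2 False unfolding assms uv_distinct[OF False] Uf_def Vf_def
      by (simp add: algebra_simps diff_divide_distrib)
  next
    case True
    have TT: "T = 2 * l1" "D = l1 * l1" using assms True by simp_all
    have s1: "(\<lambda>k. of_real (1 / fact k) * (of_nat k * l1 ^ (k - 1))) sums exp l1"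
    proof -
      have "(\<lambda>k. of_real (1 / fact (Suc k)) * (of_nat (Suc k) * l1 ^ (Suc k - 1))) = 
            (\<lambda>k. of_real (1 / fact k) * l1 ^ k)"
      proof
        fix k
        have r: "real (Suc k) * (1 / fact (Suc k)) = 1 / fact k"
          by (simp add: fact_Suc divide_simps)
        have "of_real (1 / fact (Suc k)) * (of_nat (Suc k) * l1 ^ (Suc k - 1))
            = of_real (real (Suc k) * (1 / fact (Suc k))) * (l1 ^ k :: complex)"
          by (simp only: of_real_mult of_real_of_nat_eq diff_Suc_1 ac_simps)
        then show "of_real (1 / fact (Suc k)) * (of_nat (Suc k) * l1 ^ (Suc k - 1))
            = of_real (1 / fact k) * (l1 ^ k :: complex)" unfolding r .
      qed
      then have "(\<lambda>k. of_real (1 / fact (Suc k)) * (of_nat (Suc k) * l1 ^ (Suc k - 1))) sums exp l1"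
        using exp_sums' by simp
      then show ?thesis by (subst (asm) sums_Suc_iff) simp
    qed
    have s2: "(\<lambda>k. of_real (1 / fact k) * l1 ^ k - l1 * (of_real (1 / fact k) * (of_nat k * l1 ^ (k - 1))))
        sums (exp l1 - l1 * exp l1)"
      by (intro sums_diff sums_mult s1 exp_sums')
    have s2': "(\<lambda>k. of_real (1 / fact k) * ((1 - of_nat k) * l1 ^ k)) sums ((1 - l1) * exp l1)"
    proof -
      have "(\<lambda>k. of_real (1 / fact k) * l1 ^ k - l1 * (of_real (1 / fact k) * (of_nat k * l1 ^ (k - 1))))
          = (\<lambda>k. of_real (1 / fact k) * ((1 - of_nat k) * l1 ^ k))"
      proof
        fix k show "of_real (1 / fact k) * l1 ^ k - l1 * (of_real (1 / fact k) * (of_nat k * l1 ^ (k - 1)))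
          = of_real (1 / fact k) * ((1 - of_nat k) * l1 ^ k)"
          by (cases k) (simp_all add: algebra_simps add_divide_distrib)
      qed
      then show ?thesis using s2 by (simp add: algebra_simps)
    qed
    show ?thesis using s1 s2' True unfolding TT uv_equal Uf_def Vf_def by simp
  qed
  then show "(\<lambda>k. of_real (1 / fact k) * fst (uv T D k)) sums Uf l1 l2"
    and "(\<lambda>k. of_real (1 / fact k) * snd (uv T D k)) sums Vf l1 l2" by auto
qed

abbreviation dl :: "2 \<Rightarrow> 2 \<Rightarrow> complex" where "dl i j \<equiv> (if i = j then 1 else 0)"

lemma mm2: "(A ** B) $ i $ j = A$i$1 * B$1$j + A$i$2 * B$2$j" for A B :: "complex^2^2"
  by (simp add: matrix_matrix_mult_def sum_2)

lemma matpow_uv: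
  fixes X :: "complex^2^2"
  shows "matpow X k $ i $ j = fst (uv (X$1$1 + X$2$2) (X$1$1*X$2$2 - X$1$2*X$2$1) k) * X$i$j
          + snd (uv (X$1$1 + X$2$2) (X$1$1*X$2$2 - X$1$2*X$2$1) k) * dl i j"
proof (induction k arbitrary: i j)
  case 0
  then show ?case by (simp add: mat_def)
next
  case (Suc k)
  define T where "T = X$1$1 + X$2$2"
  define D where "D = X$1$1*X$2$2 - X$1$2*X$2$1"
  define u where "u = fst (uv T D k)"
  define v where "v = snd (uv T D k)"
  have IH: "\<And>i j. matpow X k $ i $ j = u * X$i$j + v * dl i j"
    using Suc unfolding u_def v_def T_def D_def by simp
  have "matpow X (Suc k) $ i $ j = X$i$1 * matpow X k $1$j + X$i$2 * matpow X k $2$j"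
    by (simp add: mm2)
  also have "\<dots> = X$i$1 * (u * X$1$j + v * dl 1 j) + X$i$2 * (u * X$2$j + v * dl 2 j)"
    by (simp only: IH)
  also have "\<dots> = (T * u + v) * X$i$j + (- D * u) * dl i j"
    unfolding T_def D_def using exhaust_2[of i] exhaust_2[of j]
    by (elim disjE) (simp_all add: algebra_simps)
  finally show ?case unfolding u_def v_def T_def D_def by simp
qed

lemma mexp_entries:
  fixes X :: "complex^2^2"
  assumes "l1 + l2 = X$1$1 + X$2$2" "l1 * l2 = X$1$1*X$2$2 - X$1$2*X$2$1"
  shows "mexp X $ i $ j = Uf l1 l2 * X$i$j + Vf l1 l2 * dl i j"
proof -
  define T where "T = X$1$1 + X$2$2"
  define D where "D = X$1$1*X$2$2 - X$1$2*X$2$1"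
  have su: "(\<lambda>k. of_real (1 / fact k) * fst (uv T D k)) sums Uf l1 l2"
    and sv: "(\<lambda>k. of_real (1 / fact k) * snd (uv T D k)) sums Vf l1 l2"
    using uv_sums[of T l1 l2 D] assms unfolding T_def D_def by auto
  have "(\<lambda>k. (1 / fact k) *\<^sub>R matpow X k) sums (\<chi> i j. Uf l1 l2 * X$i$j + Vf l1 l2 * dl i j)"
    unfolding sums_def
  proof (rule vec_tendstoI, rule vec_tendstoI)
    fix i j
    have e: "(\<lambda>k. of_real (1 / fact k) * fst (uv T D k) * X$i$j + of_real (1 / fact k) * snd (uv T D k) * dl i j)
       sums (Uf l1 l2 * X$i$j + Vf l1 l2 * dl i j)"
      by (intro sums_add sums_mult2 su sv)
    have "(\<lambda>k. (1 / fact k) *\<^sub>R matpow X k $ i $ j) = 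
        (\<lambda>k. of_real (1 / fact k) * fst (uv T D k) * X$i$j + of_real (1 / fact k) * snd (uv T D k) * dl i j)"
      by (rule ext) (simp add: matpow_uv T_def D_def scaleR_conv_of_real algebra_simps)
    then have "(\<lambda>k. (1 / fact k) *\<^sub>R matpow X k $ i $ j) sums (Uf l1 l2 * X$i$j + Vf l1 l2 * dl i j)"
      using e by simp
    then show "((\<lambda>n. (\<Sum>k<n. (1 / fact k) *\<^sub>R matpow X k) $ i $ j) \<longlongrightarrow>
        (\<chi> i j. Uf l1 l2 * X$i$j + Vf l1 l2 * dl i j) $ i $ j) sequentially"
      unfolding sums_def by simp
  qed
  then have "mexp X = (\<chi> i j. Uf l1 l2 * X$i$j + Vf l1 l2 * dl i j)"
    unfolding mexp_def by (rule sums_unique[symmetric])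
  then show ?thesis by simp
qed

definition Qm :: "complex^2^2 \<Rightarrow> complex" where
  "Qm X = (X$1$1 - X$2$2)^2 + 4 * X$1$2 * X$2$1"

definition cc :: complex where "cc = complex_of_real (4 * pi^2)"

lemma cc_nz: "cc \<noteq> 0" unfolding cc_def by simp

lemma UV_prop:
  assumes "Uf l1 l2 = 0"
  shows "Vf l1 l2 \<noteq> 0 \<and> (\<exists>m::int. m \<noteq> 0 \<and> (l1 - l2)^2 = - cc * of_int (m^2))"
proof -
  have ne: "l1 \<noteq> l2" using assms unfolding Uf_def by auto
  then have "exp l1 - exp l2 = 0" using assms unfolding Uf_def by simp
  then have ee: "exp l1 = exp l2" by simp
  then obtain n :: int where n: "l1 = l2 + (of_int (2 * n) * pi) * \<i>" using exp_eq by blast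
  have "n \<noteq> 0" using n ne by auto
  moreover have "(l1 - l2)^2 = - cc * of_int (n^2)"
    unfolding n cc_def by (simp add: power2_eq_square algebra_simps)
  moreover have "Vf l1 l2 \<noteq> 0"
  proof -
    have "Vf l1 l2 = (l1 * exp l2 - l2 * exp l2) / (l1 - l2)" using ne ee unfolding Vf_def by simp
    also have "\<dots> = exp l2" using ne by (simp add: field_simps)
    finally show ?thesis by simp
  qed
  ultimately show ?thesis by blast
qed

lemma mexp_form:
  fixes X :: "complex^2^2"
  shows "\<exists>U V. (\<forall>i j. mexp X $ i $ j = U * X$i$j + V * dl i j) \<and>
     (U = 0 \<longrightarrow> V \<noteq> 0 \<and> (\<exists>m::int. m \<noteq> 0 \<and> Qm X = - cc * of_int (m^2)))"
proof -
  define T where "T = X$1$1 + X$2$2"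
  define D where "D = X$1$1*X$2$2 - X$1$2*X$2$1"
  define w where "w = csqrt (T^2 - 4*D)"
  define l1 where "l1 = (T + w) / 2"
  define l2 where "l2 = (T - w) / 2"
  have w2: "w^2 = T^2 - 4*D" unfolding w_def by simp
  have s: "l1 + l2 = T" unfolding l1_def l2_def by (simp add: field_simps)
  have p: "l1 * l2 = D" unfolding l1_def l2_def using w2
    by (simp add: field_simps power2_eq_square)
  have lw: "l1 - l2 = w" unfolding l1_def l2_def by (simp add: field_simps)
  have q: "(l1 - l2)^2 = Qm X" unfolding lw w2 Qm_def T_def D_def
    by (simp add: power2_eq_square algebra_simps)
  show ?thesis
    using mexp_entries[of l1 l2 X] s p UV_prop[of l1 l2] q unfolding T_def D_def by metis
qed

lemma indep_scalar:
  fixes a b c d p q r w x1 x2 x3 x4 :: complex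
  assumes e11: "x1 + x2*a + x3*p + x4*(a*p + b*r) = 0"
    and e12: "x2*b + x3*q + x4*(a*q + b*w) = 0"
    and e21: "x2*c + x3*r + x4*(c*p + d*r) = 0"
    and e22: "x1 + x2*d + x3*w + x4*(c*q + d*w) = 0"
    and nz: "(b*r - q*c)*(c*q - r*b) - (a*q + b*w - p*b - q*d)*(c*p + d*r - r*a - w*c) \<noteq> 0"
  shows "x2 = 0 \<and> x3 = 0 \<and> x4 = 0"
proof -
  define E11 where "E11 = x1 + x2*a + x3*p + x4*(a*p + b*r)"
  define E12 where "E12 = x2*b + x3*q + x4*(a*q + b*w)"
  define E21 where "E21 = x2*c + x3*r + x4*(c*p + d*r)"
  define E22 where "E22 = x1 + x2*d + x3*w + x4*(c*q + d*w)"
  define C11 where "C11 = b*r - q*c"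
  define C12 where "C12 = a*q + b*w - p*b - q*d"
  define C21 where "C21 = c*p + d*r - r*a - w*c"
  define C22 where "C22 = c*q - r*b"
  define M11 where "M11 = x3 + x4*a"
  define M12 where "M12 = x4*b"
  define M21 where "M21 = x4*c"
  define M22 where "M22 = x3 + x4*d"
  define DD where "DD = C11*C22 - C12*C21"
  have E0: "E11 = 0" "E12 = 0" "E21 = 0" "E22 = 0" using e11 e12 e21 e22
    unfolding E11_def E12_def E21_def E22_def by auto
  have "M11*C11 + M12*C21 = b*E21 - c*E12"
    unfolding M11_def M12_def C11_def C21_def E21_def E12_def by (simp add: algebra_simps)
  then have m1: "M11*C11 + M12*C21 = 0" using E0 by simp
  have "M11*C12 + M12*C22 = a*E12 + b*E22 - E11*b - E12*d"
    unfolding M11_def M12_def C12_def C22_def E11_def E12_def E22_def by (simp add: algebra_simps)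
  then have m2: "M11*C12 + M12*C22 = 0" using E0 by simp
  have "M21*C11 + M22*C21 = c*E11 + d*E21 - E21*a - E22*c"
    unfolding M21_def M22_def C11_def C21_def E11_def E21_def E22_def by (simp add: algebra_simps)
  then have m3: "M21*C11 + M22*C21 = 0" using E0 by simp
  have "M21*C12 + M22*C22 = c*E12 - b*E21"
    unfolding M21_def M22_def C12_def C22_def E12_def E21_def by (simp add: algebra_simps)
  then have m4: "M21*C12 + M22*C22 = 0" using E0 by simp
  have "M11*DD = (M11*C11 + M12*C21)*C22 - (M11*C12 + M12*C22)*C21"
    unfolding DD_def by (simp add: algebra_simps)
  then have "M11*DD = 0" using m1 m2 by simp
  moreover have "M12*DD = (M11*C12 + M12*C22)*C11 - (M11*C11 + M12*C21)*C12"
    unfolding DD_def by (simp add: algebra_simps)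
  then have "M12*DD = 0" using m1 m2 by simp
  moreover have "M21*DD = (M21*C11 + M22*C21)*C22 - (M21*C12 + M22*C22)*C21"
    unfolding DD_def by (simp add: algebra_simps)
  then have "M21*DD = 0" using m3 m4 by simp
  moreover have "M22*DD = (M21*C12 + M22*C22)*C11 - (M21*C11 + M22*C21)*C12"
    unfolding DD_def by (simp add: algebra_simps)
  then have "M22*DD = 0" using m3 m4 by simp
  moreover have DDnz: "DD \<noteq> 0" using nz unfolding DD_def C11_def C12_def C21_def C22_def .
  ultimately have M0: "M11 = 0" "M12 = 0" "M21 = 0" "M22 = 0" by auto
  have scal: "b = 0 \<and> c = 0 \<and> a = d \<Longrightarrow> False"
  proof -
    assume h: "b = 0 \<and> c = 0 \<and> a = d"
    have "DD = 0" unfolding DD_def C11_def C12_def C21_def C22_def using h by (simp add: algebra_simps)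
    then show False using DDnz by simp
  qed
  have x4: "x4 = 0"
  proof (rule ccontr)
    assume "x4 \<noteq> 0"
    then have "b = 0" "c = 0" "a = d" using M0 unfolding M11_def M12_def M21_def M22_def
      by auto (metis add_left_cancel mult_left_cancel)
    then show False using scal by simp
  qed
  have x3: "x3 = 0" using M0 x4 unfolding M11_def by simp
  have x2: "x2 = 0"
  proof (rule ccontr)
    assume "x2 \<noteq> 0"
    then have "b = 0" "c = 0" "a = d" using e11 e12 e21 e22 x3 x4
      by auto (metis add_left_cancel mult_left_cancel)
    then show False using scal by simp
  qed
  show ?thesis using x2 x3 x4 by simp
qed

lemma eig_of_root:
  fixes a b c d x y :: complex
  assumes "x * (c*x + d*y) = y * (a*x + b*y)" "x \<noteq> 0 \<or> y \<noteq> 0"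
  shows "\<exists>al. a*x + b*y = al*x \<and> c*x + d*y = al*y"
proof (cases "x = 0")
  case False
  show ?thesis
    by (rule exI[of _ "(a*x + b*y)/x"]) (use assms False in \<open>auto simp: field_simps\<close>)
next
  case True
  then have "y \<noteq> 0" using assms by auto
  show ?thesis
    by (rule exI[of _ "(c*x + d*y)/y"]) (use assms True \<open>y \<noteq> 0\<close> in \<open>auto simp: field_simps\<close>)
qed

lemma quad_root:
  fixes b0 b1 b2 :: complex
  shows "\<exists>x y. (x \<noteq> 0 \<or> y \<noteq> 0) \<and> b0*x^2 + b1*x*y + b2*y^2 = 0"
proof (cases "b0 = 0")
  case True
  then show ?thesis by (intro exI[of _ 1] exI[of _ 0]) simp
next
  case False
  define S where "S = csqrt (b1^2 - 4*b0*b2)"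
  have S2: "S^2 = b1^2 - 4*b0*b2" unfolding S_def by simp
  define x where "x = (-b1 + S) / (2*b0)"
  have "b0*x^2 + b1*x*1 + b2*1^2 = (S^2 - (b1^2 - 4*b0*b2)) / (4*b0)"
    unfolding x_def using False by (simp add: field_simps power2_eq_square)
  also have "\<dots> = 0" using S2 by simp
  finally show ?thesis by (intro exI[of _ x] exI[of _ 1]) simp
qed

lemma factor_quad:
  fixes a0 a1 a2 :: complex
  assumes "a0 \<noteq> 0 \<or> a1 \<noteq> 0 \<or> a2 \<noteq> 0"
  shows "\<exists>al be ga de. (al \<noteq> 0 \<or> be \<noteq> 0) \<and> (ga \<noteq> 0 \<or> de \<noteq> 0) \<and>
     a0 = al*ga \<and> a1 = -(al*de + be*ga) \<and> a2 = be*de"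
proof (cases "a0 = 0")
  case True
  then have "a1 \<noteq> 0 \<or> a2 \<noteq> 0" using assms by auto
  then show ?thesis using True
    by (intro exI[of _ 0] exI[of _ "-1"] exI[of _ a1] exI[of _ "-a2"]) auto
next
  case False
  define S where "S = csqrt (a1^2 - 4*a0*a2)"
  have S2: "S^2 = a1^2 - 4*a0*a2" unfolding S_def by simp
  define be where "be = (-a1 + S) / 2"
  define de where "de = (-a1 - S) / (2*a0)"
  have 1: "a1 = -(a0*de + be*1)" unfolding be_def de_def using False by (simp add: field_simps)
  have "be * de = (a1^2 - S^2) / (4*a0)" unfolding be_def de_def using False
    by (simp add: field_simps power2_eq_square)
  also have "\<dots> = a2" using S2 False by (simp add: field_simps)
  finally have 2: "a2 = be * de" by simp
  show ?thesis using False 1 2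
    by (intro exI[of _ a0] exI[of _ be] exI[of _ 1] exI[of _ de]) auto
qed

lemma common_root:
  fixes a0 a1 a2 b0 b1 b2 :: complex
  assumes "(a0*b2 - a2*b0)^2 - (a0*b1 - a1*b0)*(a1*b2 - a2*b1) = 0"
  shows "\<exists>x y. (x \<noteq> 0 \<or> y \<noteq> 0) \<and> a0*x^2 + a1*x*y + a2*y^2 = 0 \<and> b0*x^2 + b1*x*y + b2*y^2 = 0"
proof (cases "a0 = 0 \<and> a1 = 0 \<and> a2 = 0")
  case True
  then show ?thesis using quad_root[of b0 b1 b2] by auto
next
  case False
  then obtain al be ga de where ne: "al \<noteq> 0 \<or> be \<noteq> 0" "ga \<noteq> 0 \<or> de \<noteq> 0"
    and f: "a0 = al*ga" "a1 = -(al*de + be*ga)" "a2 = be*de"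
    using factor_quad[of a0 a1 a2] by blast
  define G where "G = (\<lambda>x y. b0*x^2 + b1*x*y + b2*y^2)"
  have "(a0*b2 - a2*b0)^2 - (a0*b1 - a1*b0)*(a1*b2 - a2*b1) = G be al * G de ga"
    unfolding f G_def by (simp add: power2_eq_square algebra_simps)
  then have "G be al = 0 \<or> G de ga = 0" using assms by simp
  moreover have "a0*be^2 + a1*be*al + a2*al^2 = 0" "a0*de^2 + a1*de*ga + a2*ga^2 = 0"
    unfolding f by (simp_all add: power2_eq_square algebra_simps)
  ultimately show ?thesis using ne unfolding G_def by blast
qed

definition dcom :: "complex^2^2 \<Rightarrow> complex^2^2 \<Rightarrow> complex" where
  "dcom A B = (A$1$2*B$2$1 - B$1$2*A$2$1)*(A$2$1*B$1$2 - B$2$1*A$1$2)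
     - (A$1$1*B$1$2 + A$1$2*B$2$2 - B$1$1*A$1$2 - B$1$2*A$2$2)
      *(A$2$1*B$1$1 + A$2$2*B$2$1 - B$2$1*A$1$1 - B$2$2*A$2$1)"

lemma common_eig:
  fixes f g :: "complex^2^2"
  assumes "dcom f g = 0"
  shows "\<exists>x y al be. (x \<noteq> 0 \<or> y \<noteq> 0) \<and>
     f$1$1*x + f$1$2*y = al*x \<and> f$2$1*x + f$2$2*y = al*y \<and>
     g$1$1*x + g$1$2*y = be*x \<and> g$2$1*x + g$2$2*y = be*y"
proof -
  define a where "a = f$1$1" define b where "b = f$1$2"
  define c where "c = f$2$1" define d where "d = f$2$2"
  define p where "p = g$1$1" define q where "q = g$1$2"
  define r where "r = g$2$1" define w where "w = g$2$2"
  have "(c*(-q) - (-b)*r)^2 - (c*(w-p) - (d-a)*r)*((d-a)*(-q) - (-b)*(w-p)) = - dcom f g"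
    unfolding dcom_def a_def b_def c_def d_def p_def q_def r_def w_def
    by (simp add: power2_eq_square algebra_simps)
  then obtain x y where xy: "x \<noteq> 0 \<or> y \<noteq> 0" "c*x^2 + (d-a)*x*y + (-b)*y^2 = 0"
      "r*x^2 + (w-p)*x*y + (-q)*y^2 = 0"
    using common_root[of c "-q" "-b" r "w-p" "d-a"] assms by auto
  have "x * (c*x + d*y) = y * (a*x + b*y)" using xy(2) by (simp add: power2_eq_square algebra_simps)
  then obtain al where al: "a*x + b*y = al*x \<and> c*x + d*y = al*y" using eig_of_root xy(1) by blast
  have "x * (r*x + w*y) = y * (p*x + q*y)" using xy(3) by (simp add: power2_eq_square algebra_simps)
  then obtain be where be: "p*x + q*y = be*x \<and> r*x + w*y = be*y" using eig_of_root xy(1) by blast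
  show ?thesis using xy(1) al be unfolding a_def b_def c_def d_def p_def q_def r_def w_def by blast
qed

lemma matrix_inv_eq:
  fixes P P' :: "complex^2^2"
  assumes "P ** P' = mat 1" "P' ** P = mat 1"
  shows "matrix_inv P = P'"
proof -
  have "P ** matrix_inv P = mat 1 \<and> matrix_inv P ** P = mat 1"
    unfolding matrix_inv_def by (rule someI[of _ P']) (use assms in auto)
  then have "matrix_inv P ** P = mat 1" by simp
  have "matrix_inv P = matrix_inv P ** (P ** P')" using assms by (simp add: matrix_mul_rid)
  also have "\<dots> = (matrix_inv P ** P) ** P'" by (simp add: matrix_mul_assoc)
  also have "\<dots> = P'" using \<open>matrix_inv P ** P = mat 1\<close> by (simp add: matrix_mul_lid)
  finally show ?thesis .
qed

lemma lt2: "(j::2) < i \<Longrightarrow> j = 2 \<and> i = 1"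
  using exhaust_2[of i] exhaust_2[of j] by (auto simp: less_bit0_def bit0.Rep_numeral bit0.Rep_1)

lemma trig_of_eig:
  fixes f g :: "complex^2^2"
  assumes "\<exists>x y al be. (x \<noteq> 0 \<or> y \<noteq> 0) \<and>
     f$1$1*x + f$1$2*y = al*x \<and> f$2$1*x + f$2$2*y = al*y \<and>
     g$1$1*x + g$1$2*y = be*x \<and> g$2$1*x + g$2$2*y = be*y"
  shows "simult_trigonalizable f g"
proof -
  obtain x y al be where xy: "x \<noteq> 0 \<or> y \<noteq> 0"
    and ef: "f$1$1*x + f$1$2*y = al*x" "f$2$1*x + f$2$2*y = al*y"
    and eg: "g$1$1*x + g$1$2*y = be*x" "g$2$1*x + g$2$2*y = be*y"
    using assms by blast
  obtain u1 u2 where dn: "u1*y - x*u2 \<noteq> 0"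
  proof (cases "x = 0")
    case True
    then show ?thesis by (intro that[of 1 0]) (use xy True in simp)
  next
    case False
    then show ?thesis by (intro that[of 0 1]) (use False in simp)
  qed
  define dt where "dt = u1*y - x*u2"
  define P :: "complex^2^2" where
    "P = (\<chi> i j. if j = 1 then (if i = 1 then u1 else u2) else (if i = 1 then x else y))"
  define P' :: "complex^2^2" where
    "P' = (\<chi> i j. if i = 1 then (if j = 1 then y/dt else -x/dt) else (if j = 1 then -u2/dt else u1/dt))"
  have dt: "dt \<noteq> 0" using dn unfolding dt_def .
  have PP: "P ** P' = mat 1"
    unfolding vec_eq_iff forall_2 mm2 P_def P'_def mat_def using dt
    by (auto simp: field_simps; simp add: dt_def algebra_simps)
  have PP': "P' ** P = mat 1"
    unfolding vec_eq_iff forall_2 mm2 P_def P'_def mat_def using dt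
    by (auto simp: field_simps; simp add: dt_def algebra_simps)
  have inv: "invertible P" unfolding invertible_def using PP PP' by blast
  have mi: "matrix_inv P = P'" using matrix_inv_eq PP PP' by blast
  have ut: "upper_triangular (P' ** h ** P)" if "h$1$1*x + h$1$2*y = ga*x" "h$2$1*x + h$2$2*y = ga*y"
    for h :: "complex^2^2" and ga
  proof -
    have "(P' ** h ** P) $ 1 $ 2 = 0"
    proof -
      have "(P' ** h ** P) $ 1 $ 2 = P'$1$1 * (h$1$1*x + h$1$2*y) + P'$1$2 * (h$2$1*x + h$2$2*y)"
        unfolding mm2 P_def by (simp add: algebra_simps)
      also have "\<dots> = (y/dt) * (ga*x) + (-x/dt) * (ga*y)" using that unfolding P'_def by simp
      also have "\<dots> = 0" by (simp add: field_simps)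
      finally show ?thesis .
    qed
    then show ?thesis unfolding upper_triangular_def using lt2 by blast
  qed
  show ?thesis unfolding simult_trigonalizable_def using inv mi ut[OF ef] ut[OF eg] by metis
qed

lemma dcom_trig: "dcom f g = 0 \<Longrightarrow> simult_trigonalizable f g"
  using common_eig trig_of_eig by blast

lemma key:
  fixes A B :: "complex^2^2"
  assumes hC: "\<forall>i j. mexp (A+B) $i$j = UC * (A+B)$i$j + VC * dl i j"
    and hA: "\<forall>i j. mexp A $i$j = UA * A$i$j + VA * dl i j"
    and hB: "\<forall>i j. mexp B $i$j = UB * B$i$j + VB * dl i j"
    and heq: "mexp (A+B) = mexp A ** mexp B"
    and nz: "dcom A B \<noteq> 0"
  shows "UA*UB = 0 \<and> UC = UA*VB \<and> UC = VA*UB"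
proof -
  have E: "UC*(A$i$j + B$i$j) + VC*dl i j = (UA*A$i$1 + VA*dl i 1)*(UB*B$1$j + VB*dl 1 j)
      + (UA*A$i$2 + VA*dl i 2)*(UB*B$2$j + VB*dl 2 j)" for i j
  proof -
    have "mexp (A+B) $i$j = (mexp A ** mexp B)$i$j" using heq by simp
    then show ?thesis unfolding mm2 using hA hB hC by simp
  qed
  have e11: "(VA*VB - VC) + (UA*VB - UC)*A$1$1 + (VA*UB - UC)*B$1$1 + (UA*UB)*(A$1$1*B$1$1 + A$1$2*B$2$1) = 0"
  proof -
    have h: "UC*(A$1$1 + B$1$1) + VC = (UA*A$1$1 + VA)*(UB*B$1$1 + VB) + (UA*A$1$2)*(UB*B$2$1)" using E[of 1 1] by simp
    show ?thesis using h by (simp add: algebra_simps)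
  qed
  have e12: "(UA*VB - UC)*A$1$2 + (VA*UB - UC)*B$1$2 + (UA*UB)*(A$1$1*B$1$2 + A$1$2*B$2$2) = 0"
  proof -
    have h: "UC*(A$1$2 + B$1$2) = (UA*A$1$1 + VA)*(UB*B$1$2) + (UA*A$1$2)*(UB*B$2$2 + VB)" using E[of 1 2] by simp
    show ?thesis using h by (simp add: algebra_simps)
  qed
  have e21: "(UA*VB - UC)*A$2$1 + (VA*UB - UC)*B$2$1 + (UA*UB)*(A$2$1*B$1$1 + A$2$2*B$2$1) = 0"
  proof -
    have h: "UC*(A$2$1 + B$2$1) = (UA*A$2$1)*(UB*B$1$1 + VB) + (UA*A$2$2 + VA)*(UB*B$2$1)" using E[of 2 1] by simp
    show ?thesis using h by (simp add: algebra_simps)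
  qed
  have e22: "(VA*VB - VC) + (UA*VB - UC)*A$2$2 + (VA*UB - UC)*B$2$2 + (UA*UB)*(A$2$1*B$1$2 + A$2$2*B$2$2) = 0"
  proof -
    have h: "UC*(A$2$2 + B$2$2) + VC = (UA*A$2$1)*(UB*B$1$2) + (UA*A$2$2 + VA)*(UB*B$2$2 + VB)" using E[of 2 2] by simp
    show ?thesis using h by (simp add: algebra_simps)
  qed

  have "(UA*VB - UC) = 0 \<and> (VA*UB - UC) = 0 \<and> (UA*UB) = 0"
    by (rule indep_scalar[OF e11 e12 e21 e22]) (use nz in \<open>simp add: dcom_def\<close>)
  then show ?thesis by simp
qed

lemma sc2: "(\<tau> *\<^sub>R f) $ i $ j = of_real \<tau> * (f $ i $ j :: complex)" for f :: "complex^2^2"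
  by (simp only: vector_scaleR_component) (simp add: scaleR_conv_of_real)

lemma Qm_lin:
  fixes f g :: "complex^2^2" and \<tau> :: real
  shows "Qm (\<tau> *\<^sub>R f + g) = of_real \<tau>^2 * Qm f + of_real \<tau> * (Qm (f+g) - Qm f - Qm g) + Qm g"
  unfolding Qm_def vector_add_component sc2 by (simp add: power2_eq_square algebra_simps)

lemma dcom_scale:
  fixes f g :: "complex^2^2" and \<tau> :: real
  shows "dcom (\<tau> *\<^sub>R f) g = of_real \<tau>^2 * dcom f g"
  unfolding dcom_def sc2 by (simp add: power2_eq_square algebra_simps)

lemma dcom_Q:
  fixes f g :: "complex^2^2"
  shows "16 * dcom f g = 4 * Qm f * Qm g - (Qm (f+g) - Qm f - Qm g)^2"
  unfolding dcom_def Qm_def by (simp add: power2_eq_square algebra_simps)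

lemma step:
  fixes f g :: "complex^2^2" and \<tau> :: real
  assumes "\<tau> \<noteq> 0" "dcom f g \<noteq> 0" "mexp (\<tau> *\<^sub>R f + g) = mexp (\<tau> *\<^sub>R f) ** mexp g"
  shows "(\<exists>m::int. m \<noteq> 0 \<and> Qm (\<tau> *\<^sub>R f) = - cc * of_int (m^2)) \<and>
         (\<exists>m::int. m \<noteq> 0 \<and> Qm g = - cc * of_int (m^2)) \<and>
         (\<exists>m::int. m \<noteq> 0 \<and> Qm (\<tau> *\<^sub>R f + g) = - cc * of_int (m^2))"
proof -
  obtain UA VA where A: "\<forall>i j. mexp (\<tau> *\<^sub>R f) $ i $ j = UA * (\<tau> *\<^sub>R f)$i$j + VA * dl i j"
    "UA = 0 \<longrightarrow> VA \<noteq> 0 \<and> (\<exists>m::int. m \<noteq> 0 \<and> Qm (\<tau> *\<^sub>R f) = - cc * of_int (m^2))"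
    using mexp_form[of "\<tau> *\<^sub>R f"] by blast
  obtain UB VB where B: "\<forall>i j. mexp g $ i $ j = UB * g$i$j + VB * dl i j"
    "UB = 0 \<longrightarrow> VB \<noteq> 0 \<and> (\<exists>m::int. m \<noteq> 0 \<and> Qm g = - cc * of_int (m^2))"
    using mexp_form[of g] by blast
  obtain UC VC where C: "\<forall>i j. mexp (\<tau> *\<^sub>R f + g) $ i $ j = UC * (\<tau> *\<^sub>R f + g)$i$j + VC * dl i j"
    "UC = 0 \<longrightarrow> VC \<noteq> 0 \<and> (\<exists>m::int. m \<noteq> 0 \<and> Qm (\<tau> *\<^sub>R f + g) = - cc * of_int (m^2))"
    using mexp_form[of "\<tau> *\<^sub>R f + g"] by blast
  have nz: "dcom (\<tau> *\<^sub>R f) g \<noteq> 0" using assms(1,2) by (simp add: dcom_scale)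
  have K: "UA*UB = 0 \<and> UC = UA*VB \<and> UC = VA*UB"
    by (rule key[OF C(1) A(1) B(1) assms(3) nz])
  have "UA = 0 \<and> UB = 0 \<and> UC = 0"
  proof (cases "UA = 0")
    case True
    then show ?thesis using K A(2) by auto
  next
    case False
    then have "UB = 0" using K by simp
    then show ?thesis using K B(2) False by auto
  qed
  then show ?thesis using A(2) B(2) C(2) by blast
qed

lemma absbound:
  fixes X Y D :: int
  assumes "X^2 - Y^2 = D" "D \<noteq> 0"
  shows "\<bar>X\<bar> \<le> \<bar>D\<bar>"
proof -
  define x where "x = \<bar>X\<bar>"
  define y where "y = \<bar>Y\<bar>"
  have x0: "x \<ge> 0" "y \<ge> 0" unfolding x_def y_def by auto
  have xy: "(x - y) * (x + y) = D" using assms(1) unfolding x_def y_def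
    by (simp add: power2_eq_square algebra_simps)
  show ?thesis
  proof (cases "y < x")
    case True
    then have "1 * (x + y) \<le> (x - y) * (x + y)" using x0 by (intro mult_right_mono) auto
    then show ?thesis using xy x0 unfolding x_def by simp
  next
    case False
    then have "x < y" using xy assms(2) by (cases "x = y") auto
    then have "1 * (x + y) \<le> (y - x) * (x + y)" using x0 by (intro mult_right_mono) auto
    then have "x + y \<le> - D" using xy by (simp add: algebra_simps)
    then show ?thesis using x0 unfolding x_def by simp
  qed
qed

lemma nt:
  fixes t :: "nat \<Rightarrow> int" and k p m :: int
  assumes k: "k \<noteq> 0" and sq: "\<forall>n. \<exists>s::int. s^2 = k^2 * (t n)^2 + p * t n + m^2"
    and D: "p^2 \<noteq> 4*k^2*m^2" and tb: "\<forall>n. int n \<le> t n"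
  shows False
proof -
  define Dd where "Dd = p^2 - 4*k^2*m^2"
  have Dd: "Dd \<noteq> 0" using D unfolding Dd_def by simp
  have bound: "\<bar>2*k^2*t n + p\<bar> \<le> \<bar>Dd\<bar>" for n
  proof -
    obtain z where hs: "z^2 = k^2 * (t n)^2 + p * t n + m^2" using sq by blast
    have "(2*k*z)^2 = 4*k^2*(z^2)" by (simp add: power_mult_distrib)
    also have "\<dots> = 4*k^2*(k^2 * (t n)^2 + p * t n + m^2)" unfolding hs ..
    finally have "(2*k^2*t n + p)^2 - (2*k*z)^2 = Dd" unfolding Dd_def
      by (simp add: power2_eq_square algebra_simps)
    then show ?thesis using absbound Dd by blast
  qed
  define n0 where "n0 = nat (\<bar>Dd\<bar> + \<bar>p\<bar>) + 1"
  have t0: "t n0 > \<bar>Dd\<bar> + \<bar>p\<bar>" using tb[rule_format, of n0] unfolding n0_def by linarith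
  have "k^2 > 0" using k by simp
  then have k2: "k^2 \<ge> 1" by linarith
  have "t n0 \<le> 2*k^2*t n0"
  proof -
    have "1 * t n0 \<le> (2*k^2) * t n0" using k2 t0 by (intro mult_right_mono) auto
    then show ?thesis by simp
  qed
  then show False using bound[of n0] t0 by linarith
qed

theorem corollary1:
  fixes f g :: "complex^2^2" and t :: "nat \<Rightarrow> int"
  assumes "strict_mono t" and "t 0 = 1" and "t 1 = 2"
    and "\<forall>n. mexp (of_int (t n) *\<^sub>R f + g) = mexp (of_int (t n) *\<^sub>R f) ** mexp g"
  shows "simult_trigonalizable f g"
proof (rule ccontr)
  assume ns: "\<not> simult_trigonalizable f g"
  have Dnz: "dcom f g \<noteq> 0" using dcom_trig ns by blast
  have tb: "int n + 1 \<le> t n" for n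
  proof (induction n)
    case 0 then show ?case using assms(2) by simp
  next
    case (Suc n)
    have "t n < t (Suc n)" using assms(1) by (simp add: strict_mono_def)
    then show ?case using Suc by simp
  qed
  have tnz: "real_of_int (t n) \<noteq> 0" for n using tb[of n] by simp
  have S: "(\<exists>m::int. m \<noteq> 0 \<and> Qm (real_of_int (t n) *\<^sub>R f) = - cc * of_int (m^2)) \<and>
         (\<exists>m::int. m \<noteq> 0 \<and> Qm g = - cc * of_int (m^2)) \<and>
         (\<exists>m::int. m \<noteq> 0 \<and> Qm (real_of_int (t n) *\<^sub>R f + g) = - cc * of_int (m^2))" for n
    by (rule step[OF tnz Dnz assms(4)[rule_format, of n]])
  obtain k where k: "k \<noteq> 0" "Qm f = - cc * of_int (k^2)" using S[of 0] assms(2) by auto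
  obtain m where m: "Qm g = - cc * of_int (m^2)" using S[of 0] by auto
  obtain n1 where n1: "Qm (f+g) = - cc * of_int (n1^2)" using S[of 0] assms(2) by auto
  define p2 where "p2 = n1^2 - k^2 - m^2"
  have P: "Qm (f+g) - Qm f - Qm g = - cc * of_int p2" unfolding p2_def k(2) m n1
    by (simp add: algebra_simps)
  have sq: "\<forall>n. \<exists>z::int. z^2 = k^2 * (t n)^2 + p2 * t n + m^2"
  proof
    fix n
    obtain z where z: "Qm (real_of_int (t n) *\<^sub>R f + g) = - cc * of_int (z^2)" using S[of n] by blast
    have "Qm (real_of_int (t n) *\<^sub>R f + g) = of_real (real_of_int (t n))^2 * Qm f
        + of_real (real_of_int (t n)) * (- cc * of_int p2) + Qm g"
      using Qm_lin[of "real_of_int (t n)" f g] unfolding P .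
    then have "- cc * of_int (z^2) = - cc * of_int (k^2 * (t n)^2 + p2 * t n + m^2)"
      unfolding z k(2) m by (simp add: algebra_simps)
    then have "of_int (z^2) = (of_int (k^2 * (t n)^2 + p2 * t n + m^2) :: complex)" using cc_nz by simp
    then have "z^2 = k^2 * (t n)^2 + p2 * t n + m^2" by (simp only: of_int_eq_iff)
    then show "\<exists>z::int. z^2 = k^2 * (t n)^2 + p2 * t n + m^2" by blast
  qed
  have "16 * dcom f g = 4 * Qm f * Qm g - (- cc * of_int p2)^2"
    using dcom_Q[of f g, unfolded P] .
  also have "\<dots> = cc^2 * of_int (4*k^2*m^2 - p2^2)"
    unfolding k(2) m by (simp add: algebra_simps power2_eq_square)
  finally have eq16: "16 * dcom f g = cc^2 * of_int (4*k^2*m^2 - p2^2)" .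
  have "16 * dcom f g \<noteq> 0" using Dnz by simp
  then have "cc^2 * of_int (4*k^2*m^2 - p2^2) \<noteq> (0::complex)" unfolding eq16 .
  then have "of_int (4*k^2*m^2 - p2^2) \<noteq> (0::complex)" by (metis mult_zero_right)
  then have "4*k^2*m^2 - p2^2 \<noteq> 0" by (metis of_int_0)
  then have "p2^2 \<noteq> 4*k^2*m^2" by simp
  moreover have "\<forall>n. int n \<le> t n" 
  proof
    fix n show "int n \<le> t n" using tb[of n] by linarith
  qed
  ultimately show False using nt[OF k(1) sq] by blast
qed

end
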